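(* For every $n\ge 0$, $$B(2n,0)=\sum_{\lambda\in\Lambda_n}\prod_{i=1}^n\lambda_i^2 .$$
   Context: A labeled ballot path is a lattice path from $(0,0)$ with steps $u=(1,1)$, $d=(1,-1)$ never going below the $x$-axis, each step carrying an integer label between $0$ and its height, where the height of a step is the smaller $y$-coordinate of its endpoints. $B(n,k)$ is the number of labeled ballot paths ending at $(n,k)$; thus $B(2n,0)$ counts labeled Dyck paths of length $2n$. $\Lambda_n$ is the set of integer sequences $\lambda_1\cdots\lambda_n$ with $\lambda_1=1$ and $1\le\lambda_j\le\lambda_{j-1}+1$ for $2\le j\le n$. *)

theory Defs
  imports Main
begin

text \<open>A step sequence is a list of booleans: True = up step u=(1,1), False = down step d=(1,-1).\<close>

definition step_val :: "bool \<Rightarrow> int" where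
  "step_val b = (if b then 1 else -1)"

definition hgt :: "bool list \<Rightarrow> nat \<Rightarrow> int" where
  "hgt s j = (\<Sum>i<j. step_val (s ! i))"

definition step_height :: "bool list \<Rightarrow> nat \<Rightarrow> int" where
  "step_height s i = min (hgt s i) (hgt s (Suc i))"

definition ballot :: "bool list \<Rightarrow> bool" where
  "ballot s \<longleftrightarrow> (\<forall>j\<le>length s. hgt s j \<ge> 0)"

definition labeled_ballot_paths :: "nat \<Rightarrow> int \<Rightarrow> (bool list \<times> nat list) set" where
  "labeled_ballot_paths n k = {(s, l). length s = n \<and> length l = n \<and> ballot s \<and>
      hgt s n = k \<and> (\<forall>i<n. int (l ! i) \<le> step_height s i)}"

definition B :: "nat \<Rightarrow> int \<Rightarrow> nat" where
  "B n k = card (labeled_ballot_paths n k)"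

text \<open>\<Lambda>_n as lists (index j of the list is \<lambda>_{j+1}).\<close>
definition Lambda :: "nat \<Rightarrow> nat list set" where
  "Lambda n = {xs. length xs = n \<and> (n \<ge> 1 \<longrightarrow> xs ! 0 = 1) \<and>
      (\<forall>j. 1 \<le> j \<and> j < n \<longrightarrow> 1 \<le> xs ! j \<and> xs ! j \<le> xs ! (j - 1) + 1)}"

end

theory Submission
  imports Defs
begin

fun bb :: "nat \<Rightarrow> nat \<Rightarrow> nat" where
  "bb 0 k = (if k = 0 then 1 else 0)"
| "bb (Suc m) k = k * bb m (k - 1) + (k + 1) * bb m (k + 1)"

fun S :: "nat \<Rightarrow> nat \<Rightarrow> nat" where
  "S 0 h = 1"
| "S (Suc n) h = (\<Sum>j=1..h+1. j^2 * S n j)"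

definition L :: "nat \<Rightarrow> nat \<Rightarrow> nat list set" where
  "L n h = {xs. length xs = n \<and> (\<forall>j<n. 1 \<le> xs!j \<and> xs!j \<le> (if j = 0 then h else xs!(j-1)) + 1)}"

lemma bb_zero: "m < k \<Longrightarrow> bb m k = 0"
  by (induction m arbitrary: k) auto

lemma bb_diag: "bb h h = fact h"
proof (induction h)
  case 0 then show ?case by simp
next
  case (Suc h) then show ?case by (simp add: bb_zero)
qed

lemma prod_fact: "1 \<le> j \<Longrightarrow> j \<le> h + 1 \<Longrightarrow> prod id {j..h} * fact (j - 1) = fact h"
proof (induction h)
  case 0 then show ?case by auto
next
  case (Suc h)
  show ?case
  proof (cases "j = Suc h + 1")
    case True then show ?thesis by simp
  next
    case False
    then have "j \<le> Suc h" using Suc by simp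
    then have "{j..Suc h} = insert (Suc h) {j..h}" by auto
    then have "prod id {j..Suc h} = Suc h * prod id {j..h}" by simp
    moreover have "prod id {j..h} * fact (j - 1) = fact h" using Suc False by simp
    ultimately show ?thesis by (simp add: algebra_simps)
  qed
qed

lemma bb_decomp:
  "bb (2*(Suc n) + h) h = (\<Sum>j=1..h+1. prod id {j..h} * j * bb (2*n + j) j)"
proof (induction h)
  case 0 then show ?case by simp
next
  case (Suc h)
  have e: "2*(Suc n) + Suc h = Suc (2*(Suc n) + h)" by simp
  have "bb (2*(Suc n) + Suc h) (Suc h) = Suc h * bb (2*(Suc n) + h) h + (Suc h + 1) * bb (2*n + Suc (Suc h)) (Suc (Suc h))"
    by (simp only: e bb.simps) (simp add: algebra_simps)
  also have "\<dots> = Suc h * (\<Sum>j=1..h+1. prod id {j..h} * j * bb (2*n + j) j) + (Suc h + 1) * bb (2*n + Suc (Suc h)) (Suc (Suc h))"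
    by (simp only: Suc.IH)
  also have "Suc h * (\<Sum>j=1..h+1. prod id {j..h} * j * bb (2*n + j) j) = (\<Sum>j=1..h+1. Suc h * (prod id {j..h} * j * bb (2*n + j) j))"
    by (rule sum_distrib_left)
  also have "(\<Sum>j=1..h+1. Suc h * (prod id {j..h} * j * bb (2*n + j) j)) = (\<Sum>j=1..h+1. prod id {j..Suc h} * j * bb (2*n + j) j)"
  proof (rule sum.cong)
    fix j assume "j \<in> {1..h+1}"
    then have "{j..Suc h} = insert (Suc h) {j..h}" by auto
    then show "Suc h * (prod id {j..h} * j * bb (2*n + j) j) = prod id {j..Suc h} * j * bb (2*n + j) j" by (simp add: algebra_simps)
  qed simp
  also have "(\<Sum>j=1..h+1. prod id {j..Suc h} * j * bb (2*n + j) j) + (Suc h + 1) * bb (2*n + Suc (Suc h)) (Suc (Suc h))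
     = (\<Sum>j=1..Suc h+1. prod id {j..Suc h} * j * bb (2*n + j) j)"
  proof -
    have "prod id {Suc (Suc h)..Suc h} = 1" by simp
    then show ?thesis using sum.cl_ivl_Suc[of "\<lambda>j. prod id {j..Suc h} * j * bb (2*n + j) j" 1 "Suc h"]
      by (simp only: Suc_eq_plus1 add.assoc one_add_one) simp
  qed
  finally show ?case .
qed

lemma fact_step: "prod id {j..h} * j * (fact j * S n j) = fact h * (j^2 * S n j)"
  if j: "j \<in> {1..h+1}" for j h n
proof -
  obtain i where i: "j = Suc i" using j by (cases j) auto
  have p: "prod id {j..h} * fact i = fact h" using j prod_fact[of j h] i by simp
  have "prod id {j..h} * j * (fact j * S n j) = (prod id {j..h} * fact i) * (j * j * S n j)"
    unfolding i fact_Suc of_nat_id by (simp only: mult_ac)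
  also have "\<dots> = fact h * (j^2 * S n j)" unfolding p by (simp only: power2_eq_square)
  finally show ?thesis .
qed

lemma bb_S: "bb (2*n + h) h = fact h * S n h"
proof (induction n arbitrary: h)
  case 0 then show ?case by (simp add: bb_diag)
next
  case (Suc n)
  have "bb (2*(Suc n) + h) h = (\<Sum>j=1..h+1. prod id {j..h} * j * bb (2*n + j) j)"
    by (rule bb_decomp)
  also have "\<dots> = (\<Sum>j=1..h+1. prod id {j..h} * j * (fact j * S n j))"
    by (intro sum.cong refl arg_cong2[where f="(*)"] Suc.IH)
  also have "\<dots> = (\<Sum>j=1..h+1. fact h * (j^2 * S n j))"
    by (intro sum.cong refl fact_step)
  also have "\<dots> = fact h * S (Suc n) h"
    by (simp only: S.simps sum_distrib_left)
  finally show ?case .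
qed

lemma L_0: "L 0 h = {[]}"
  unfolding L_def by auto

lemma L_Suc: "L (Suc n) h = (\<lambda>(j,xs). j # xs) ` (SIGMA j:{1..h+1}. L n j)"
proof (intro set_eqI iffI)
  fix xs assume "xs \<in> L (Suc n) h"
  then have len: "length xs = Suc n" and c: "\<forall>j<Suc n. 1 \<le> xs!j \<and> xs!j \<le> (if j = 0 then h else xs!(j-1)) + 1"
    unfolding L_def by auto
  obtain j ys where xs: "xs = j # ys" using len by (cases xs) auto
  have "j \<in> {1..h+1}" using c[rule_format, of 0] xs by auto
  moreover have "ys \<in> L n j" unfolding L_def
  proof (rule CollectI, rule conjI)
    show "length ys = n" using len xs by simp
  next
    show "\<forall>i<n. 1 \<le> ys!i \<and> ys!i \<le> (if i = 0 then j else ys!(i-1)) + 1"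
    proof (intro allI impI)
    fix i assume i: "i < n"
    have "1 \<le> xs!Suc i \<and> xs!Suc i \<le> xs!i + 1" using c[rule_format, of "Suc i"] i by simp
    then show "1 \<le> ys!i \<and> ys!i \<le> (if i = 0 then j else ys!(i-1)) + 1"
      using xs by (cases i) auto
    qed
  qed
  ultimately show "xs \<in> (\<lambda>(j,xs). j # xs) ` (SIGMA j:{1..h+1}. L n j)" using xs by auto
next
  fix xs assume "xs \<in> (\<lambda>(j,xs). j # xs) ` (SIGMA j:{1..h+1}. L n j)"
  then obtain j ys where xs: "xs = j # ys" and j: "j \<in> {1..h+1}" and ys: "ys \<in> L n j" by auto
  from ys have len: "length ys = n" and c: "\<forall>i<n. 1 \<le> ys!i \<and> ys!i \<le> (if i = 0 then j else ys!(i-1)) + 1"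
    unfolding L_def by auto
  show "xs \<in> L (Suc n) h" unfolding L_def
  proof (rule CollectI, rule conjI)
    show "length xs = Suc n" using xs len by simp
  next
    show "\<forall>i<Suc n. 1 \<le> xs!i \<and> xs!i \<le> (if i = 0 then h else xs!(i-1)) + 1"
    proof (intro allI impI)
    fix i assume i: "i < Suc n"
    show "1 \<le> xs!i \<and> xs!i \<le> (if i = 0 then h else xs!(i-1)) + 1"
    proof (cases i)
      case 0 then show ?thesis using xs j by auto
    next
      case (Suc i')
      then have "1 \<le> ys!i' \<and> ys!i' \<le> (if i' = 0 then j else ys!(i'-1)) + 1" using c i by auto
      then show ?thesis using xs Suc by (cases i') auto
    qed
    qed
  qed
qed

lemma L_finite: "finite (L n h)"
proof (induction n arbitrary: h)
  case 0 then show ?case by (simp add: L_0)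
next
  case (Suc n) then show ?case by (simp add: L_Suc)
qed

lemma sum_L: "(\<Sum>xs\<in>L n h. \<Prod>i<n. (xs!i)^2) = S n h"
proof (induction n arbitrary: h)
  case 0 then show ?case by (simp add: L_0)
next
  case (Suc n)
  have inj: "inj_on (\<lambda>(j,xs). j # xs) (SIGMA j:{1..h+1}. L n j)"
    by (auto simp: inj_on_def)
  have "(\<Sum>xs\<in>L (Suc n) h. \<Prod>i<Suc n. (xs!i)^2)
      = (\<Sum>(j,xs)\<in>(SIGMA j:{1..h+1}. L n j). \<Prod>i<Suc n. ((j#xs)!i)^2)"
    unfolding L_Suc by (subst sum.reindex[OF inj]) (simp add: case_prod_unfold)
  also have "\<dots> = (\<Sum>j=1..h+1. \<Sum>xs\<in>L n j. j^2 * (\<Prod>i<n. (xs!i)^2))"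
    apply (subst sum.Sigma[symmetric])
      apply (auto simp: L_finite)[2]
    apply (intro sum.cong refl)
    apply (simp only: prod.lessThan_Suc_shift nth_Cons_0 nth_Cons_Suc mult.commute)
    done
  also have "\<dots> = S (Suc n) h"
    by (simp add: sum_distrib_left[symmetric] Suc.IH)
  finally show ?case .
qed

lemma Lambda_L: "Lambda n = L n 0"
proof -
  have "(length xs = n \<and> (n \<ge> 1 \<longrightarrow> xs ! 0 = 1) \<and>
      (\<forall>j. 1 \<le> j \<and> j < n \<longrightarrow> 1 \<le> xs ! j \<and> xs ! j \<le> xs ! (j - 1) + 1))
     = (length xs = n \<and> (\<forall>j<n. 1 \<le> xs!j \<and> xs!j \<le> (if j = 0 then 0 else xs!(j-1)) + 1))" for xs :: "nat list"
  proof
    assume a: "length xs = n \<and> (n \<ge> 1 \<longrightarrow> xs ! 0 = 1) \<and>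
      (\<forall>j. 1 \<le> j \<and> j < n \<longrightarrow> 1 \<le> xs ! j \<and> xs ! j \<le> xs ! (j - 1) + 1)"
    have "\<forall>j<n. 1 \<le> xs!j \<and> xs!j \<le> (if j = 0 then 0 else xs!(j-1)) + 1"
    proof (rule allI, rule impI)
      fix j assume j: "j < n"
      show "1 \<le> xs!j \<and> xs!j \<le> (if j = 0 then 0 else xs!(j-1)) + 1"
      proof (cases "j = 0")
        case True then show ?thesis using a j by auto
      next
        case False then show ?thesis using a j by auto
      qed
    qed
    then show "length xs = n \<and> (\<forall>j<n. 1 \<le> xs!j \<and> xs!j \<le> (if j = 0 then 0 else xs!(j-1)) + 1)"
      using a by blast
  next
    assume a: "length xs = n \<and> (\<forall>j<n. 1 \<le> xs!j \<and> xs!j \<le> (if j = 0 then 0 else xs!(j-1)) + 1)"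
    have b: "\<forall>j. 1 \<le> j \<and> j < n \<longrightarrow> 1 \<le> xs ! j \<and> xs ! j \<le> xs ! (j - 1) + 1"
    proof (rule allI, rule impI)
      fix j assume j: "1 \<le> j \<and> j < n"
      then have "1 \<le> xs!j \<and> xs!j \<le> (if j = 0 then 0 else xs!(j-1)) + 1" using a by blast
      then show "1 \<le> xs ! j \<and> xs ! j \<le> xs ! (j - 1) + 1" using j by simp
    qed
    have c: "n \<ge> 1 \<longrightarrow> xs ! 0 = 1"
    proof
      assume "n \<ge> 1"
      then have "(0::nat) < n" by simp
      then have "1 \<le> xs!0 \<and> xs!0 \<le> (if (0::nat) = 0 then 0 else xs!(0-1)) + 1" using a by blast
      then show "xs ! 0 = 1" by simp
    qed
    show "length xs = n \<and> (n \<ge> 1 \<longrightarrow> xs ! 0 = 1) \<and>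
      (\<forall>j. 1 \<le> j \<and> j < n \<longrightarrow> 1 \<le> xs ! j \<and> xs ! j \<le> xs ! (j - 1) + 1)"
      using a b c by blast
  qed
  then show ?thesis unfolding Lambda_def L_def by simp
qed

abbreviation "P \<equiv> labeled_ballot_paths"

lemma hgt_0: "hgt s 0 = 0"
  unfolding hgt_def by simp

lemma hgt_app: "j \<le> length s \<Longrightarrow> hgt (s @ t) j = hgt s j"
  unfolding hgt_def by (intro sum.cong refl) (simp add: nth_append)

lemma hgt_snoc: "hgt (s @ [x]) (Suc (length s)) = hgt s (length s) + step_val x"
  unfolding hgt_def by (simp add: nth_append)

lemma sh_app: "i < length s \<Longrightarrow> step_height (s @ t) i = step_height s i"
  unfolding step_height_def by (simp add: hgt_app)

lemma sh_snoc: "step_height (s @ [x]) (length s) = min (hgt s (length s)) (hgt s (length s) + step_val x)"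
  unfolding step_height_def by (simp add: hgt_app hgt_snoc)

lemma ballot_snoc: "ballot (s @ [x]) \<longleftrightarrow> ballot s \<and> 0 \<le> hgt s (length s) + step_val x"
proof
  assume a: "ballot (s @ [x])"
  have "ballot s" unfolding ballot_def
  proof (intro allI impI)
    fix j assume "j \<le> length s"
    then show "0 \<le> hgt s j" using a[unfolded ballot_def, rule_format, of j] hgt_app[of j s "[x]"] by simp
  qed
  moreover have "0 \<le> hgt s (length s) + step_val x"
    using a[unfolded ballot_def, rule_format, of "Suc (length s)"] hgt_snoc[of s x] by simp
  ultimately show "ballot s \<and> 0 \<le> hgt s (length s) + step_val x" by blast
next
  assume a: "ballot s \<and> 0 \<le> hgt s (length s) + step_val x"
  show "ballot (s @ [x])" unfolding ballot_def
  proof (intro allI impI)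
    fix j assume j: "j \<le> length (s @ [x])"
    show "0 \<le> hgt (s @ [x]) j"
    proof (cases "j \<le> length s")
      case True then show ?thesis using a hgt_app[of j s "[x]"] unfolding ballot_def by simp
    next
      case False then have "j = Suc (length s)" using j by simp
      then show ?thesis using a hgt_snoc[of s x] by simp
    qed
  qed
qed

lemma mem_snoc:
  assumes "length s = m" "length l = m"
  shows "((s @ [x], l @ [y]) \<in> P (Suc m) k) \<longleftrightarrow>
    ((s, l) \<in> P m (k - step_val x) \<and> 0 \<le> k \<and> int y \<le> min (k - step_val x) k)"
proof -
  have lab: "(\<forall>i<Suc m. int ((l @ [y]) ! i) \<le> step_height (s @ [x]) i) \<longleftrightarrow>
      (\<forall>i<m. int (l ! i) \<le> step_height s i) \<and> int y \<le> step_height (s @ [x]) m"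
    using assms by (auto simp: nth_append sh_app less_Suc_eq)
  show ?thesis
    unfolding labeled_ballot_paths_def mem_Collect_eq case_prod_conv lab
    using assms sh_snoc[of s x] hgt_snoc[of s x] ballot_snoc[of s x]
    by auto
qed

lemma P_neg: "k < 0 \<Longrightarrow> P m k = {}"
  unfolding labeled_ballot_paths_def ballot_def by force

lemma P_0: "P 0 k = (if k = 0 then {([],[])} else {})"
  unfolding labeled_ballot_paths_def ballot_def by (auto simp: hgt_0)

lemma P_Suc: "P (Suc m) (int k) =
   (\<lambda>((s,l),y). (s@[True], l@[y])) ` (P m (int k - 1) \<times> {..<k}) \<union>
   (\<lambda>((s,l),y). (s@[False], l@[y])) ` (P m (int k + 1) \<times> {..k})"
proof (intro set_eqI iffI)
  fix z assume z: "z \<in> P (Suc m) (int k)"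
  obtain s' l' where zz: "z = (s', l')" by (cases z)
  have "length s' = Suc m" "length l' = Suc m" using z zz unfolding labeled_ballot_paths_def by auto
  then obtain s x l y where s': "s' = s @ [x]" "length s = m" and l': "l' = l @ [y]" "length l = m"
    by (metis length_Suc_conv_rev)
  have m: "(s, l) \<in> P m (int k - step_val x) \<and> int y \<le> min (int k - step_val x) (int k)"
    using mem_snoc[of s m l x y "int k"] s' l' z zz by simp
  show "z \<in> (\<lambda>((s,l),y). (s@[True], l@[y])) ` (P m (int k - 1) \<times> {..<k}) \<union>
   (\<lambda>((s,l),y). (s@[False], l@[y])) ` (P m (int k + 1) \<times> {..k})"
  proof (cases x)
    case True
    then have "((s,l),y) \<in> P m (int k - 1) \<times> {..<k}" using m by (simp add: step_val_def)
    then show ?thesis using zz s' l' True by force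
  next
    case False
    then have "((s,l),y) \<in> P m (int k + 1) \<times> {..k}" using m by (simp add: step_val_def)
    then show ?thesis using zz s' l' False by force
  qed
next
  fix z assume "z \<in> (\<lambda>((s,l),y). (s@[True], l@[y])) ` (P m (int k - 1) \<times> {..<k}) \<union>
   (\<lambda>((s,l),y). (s@[False], l@[y])) ` (P m (int k + 1) \<times> {..k})"
  then obtain s l y x where zz: "z = (s @ [x], l @ [y])" and
    c: "(x \<and> (s,l) \<in> P m (int k - 1) \<and> y < k) \<or> (\<not> x \<and> (s,l) \<in> P m (int k + 1) \<and> y \<le> k)"
    by force
  have len: "length s = m" "length l = m" using c unfolding labeled_ballot_paths_def by auto
  show "z \<in> P (Suc m) (int k)"
    unfolding zz mem_snoc[OF len] using c by (auto simp: step_val_def)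
qed

lemma P_finite: "finite (P m k)"
proof (induction m arbitrary: k)
  case 0 then show ?case by (simp add: P_0)
next
  case (Suc m)
  show ?case
  proof (cases "k < 0")
    case True then show ?thesis by (simp add: P_neg)
  next
    case False
    then obtain k' where "k = int k'" by (metis nonneg_eq_int not_less)
    then show ?thesis by (simp add: P_Suc Suc.IH)
  qed
qed

lemma card_P: "card (P m (int k)) = bb m k"
proof (induction m arbitrary: k)
  case 0 then show ?case by (simp add: P_0)
next
  case (Suc m)
  let ?A = "(\<lambda>((s,l),y). (s@[True], l@[y])) ` (P m (int k - 1) \<times> {..<k})"
  let ?C = "(\<lambda>((s,l),y). (s@[False], l@[y])) ` (P m (int k + 1) \<times> {..k})"
  have i1: "inj_on (\<lambda>((s,l),y). (s@[True], l@[y])) (P m (int k - 1) \<times> {..<k})"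
    by (auto simp: inj_on_def)
  have i2: "inj_on (\<lambda>((s,l),y). (s@[False], l@[y])) (P m (int k + 1) \<times> {..k})"
    by (auto simp: inj_on_def)
  have d: "?A \<inter> ?C = {}" by auto
  have f: "finite ?A" "finite ?C" by (simp_all add: P_finite)
  have "card (P (Suc m) (int k)) = card ?A + card ?C"
    unfolding P_Suc by (rule card_Un_disjoint[OF f d])
  also have "card ?A = card (P m (int k - 1)) * k"
    by (simp add: card_image[OF i1] card_cartesian_product)
  also have "\<dots> = k * bb m (k - 1)"
  proof (cases k)
    case 0 then show ?thesis by simp
  next
    case (Suc k')
    then have "int k - 1 = int k'" by simp
    then show ?thesis using Suc.IH[of k'] Suc by simp
  qed
  also have "card ?C = card (P m (int k + 1)) * (k + 1)"
    by (simp add: card_image[OF i2] card_cartesian_product)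
  also have "\<dots> = (k + 1) * bb m (k + 1)"
  proof -
    have "int k + 1 = int (k + 1)" by simp
    then show ?thesis using Suc.IH[of "k+1"] by (simp only: mult.commute)
  qed
  finally show ?case by simp
qed

theorem corollary4p3:
  fixes n :: nat
  shows "B (2 * n) 0 = (\<Sum>xs\<in>Lambda n. \<Prod>i<n. (xs ! i) ^ 2)"
proof -
  have "B (2 * n) 0 = bb (2 * n + 0) 0"
    using card_P[of "2*n" 0] unfolding B_def by simp
  also have "\<dots> = S n 0" by (simp only: bb_S) simp
  also have "\<dots> = (\<Sum>xs\<in>Lambda n. \<Prod>i<n. (xs ! i) ^ 2)"
    by (simp add: Lambda_L sum_L)
  finally show ?thesis .
qed

end
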